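(* Let $d>k\ge 0$ be integers. Then $f(k,d)\le \frac{k+2}{d+3}$.
   Context: For a graph $G=(V,E)$ and an integer $k\ge 0$, a $k$-independent set is a set $S\subseteq V$ such that the induced subgraph $G[S]$ has maximum degree at most $k$; $\alpha_k(G)$ denotes the maximum cardinality of a $k$-independent set of $G$. $n(G)$ is the number of vertices and $d(G)=2|E(G)|/n(G)$ the average degree. For integers $d,k\ge 0$, $f(k,d)=\inf\left\{\frac{\alpha_k(G)}{n(G)} : G \text{ a finite simple graph with at least one vertex and } d(G)\le d\right\}$. *)

theory Defs
  imports Complex_Main
begin

text \<open>Vertices are drawn from nat; every finite simple graph
  is isomorphic to one of this form, so the infimum is unaffected.\<close>

definition simple_graph :: "nat set \<Rightarrow> nat set set \<Rightarrow> bool" where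
  "simple_graph V E \<longleftrightarrow> finite V \<and> (\<forall>e\<in>E. e \<subseteq> V \<and> card e = 2)"

definition k_independent :: "nat set set \<Rightarrow> nat \<Rightarrow> nat set \<Rightarrow> bool" where
  "k_independent E k S \<longleftrightarrow>
     (\<forall>v\<in>S. card {u\<in>S. {u, v} \<in> E} \<le> k)"

definition alpha_k :: "nat set \<Rightarrow> nat set set \<Rightarrow> nat \<Rightarrow> nat" where
  "alpha_k V E k = Max {card S | S. S \<subseteq> V \<and> k_independent E k S}"

definition avg_degree :: "nat set \<Rightarrow> nat set set \<Rightarrow> real" where
  "avg_degree V E = 2 * real (card E) / real (card V)"

definition f_kd :: "nat \<Rightarrow> nat \<Rightarrow> real" where
  "f_kd k d = Inf {real (alpha_k V E k) / real (card V) | V E.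
                    simple_graph V E \<and> V \<noteq> {} \<and> avg_degree V E \<le> real d}"

end

theory Submission
  imports Defs
begin

lemma card_diff_ge: "finite S \<Longrightarrow> finite X \<Longrightarrow> card S \<le> card (S - X) + card X"
  using diff_card_le_card_Diff[of X S] by linarith

lemma mainTheorem10_aux:
  fixes k d :: nat
  assumes "d > k"
  defines "n \<equiv> d + 3"
  defines "V \<equiv> {0..<n}"
  defines "C \<equiv> (\<lambda>i. {i, Suc i mod n}) ` {0..<n}"
  defines "E \<equiv> {e. e \<subseteq> V \<and> card e = 2} - C"
  shows "simple_graph V E \<and> V \<noteq> {} \<and> avg_degree V E \<le> real d \<and> alpha_k V E k \<le> k + 2"
proof -
  have n3: "n \<ge> 3" unfolding n_def by simp
  have sg: "simple_graph V E" unfolding simple_graph_def E_def V_def by auto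
  have cyc2: "card {i, Suc i mod n} = 2" if "i < n" for i
  proof -
    have "i \<noteq> Suc i mod n"
    proof (cases "Suc i < n")
      case True then show ?thesis by simp
    next
      case False then have "Suc i = n" using that by simp
      then show ?thesis using n3 by simp
    qed
    then show ?thesis by simp
  qed
  have inj: "inj_on (\<lambda>i. {i, Suc i mod n}) {0..<n}"
  proof (rule inj_onI)
    fix i j assume i: "i \<in> {0..<n}" and j: "j \<in> {0..<n}" and eq: "{i, Suc i mod n} = {j, Suc j mod n}"
    show "i = j"
    proof (rule ccontr)
      assume ne: "i \<noteq> j"
      then have a: "i = Suc j mod n" and b: "j = Suc i mod n" using eq by (auto simp: doubleton_eq_iff)
      have "(i + 2) mod n = i mod n"
      proof -
        have "Suc (Suc i mod n) mod n = Suc (Suc i) mod n" by (rule mod_Suc_eq)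
        then have "i = Suc (Suc i) mod n" using a b by (metis (no_types))
        then show ?thesis using i by simp
      qed
      then have "(i + 2) mod n = i" using i by simp
      moreover have "(i + 2) mod n \<noteq> i"
      proof (cases "i + 2 < n")
        case True then show ?thesis by simp
      next
        case False
        then have "i + 2 - n < n" using i n3 by auto
        have "(i + 2) mod n = i + 2 - n" using False i
        proof -
          have "(i + 2) mod n = (i + 2 - n) mod n" by (rule le_mod_geq) (use False in simp)
          then show ?thesis using \<open>i + 2 - n < n\<close> by simp
        qed
        then show ?thesis using n3 False by simp
      qed
      ultimately show False by simp
    qed
  qed
  have cardC: "card C = n" unfolding C_def using card_image[OF inj] by simp
  have CsubP: "C \<subseteq> {e. e \<subseteq> V \<and> card e = 2}" unfolding C_def V_def using cyc2 n3 by auto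
  have finP: "finite {e. e \<subseteq> V \<and> card e = 2}" unfolding V_def by simp
  have cardP: "card {e. e \<subseteq> V \<and> card e = 2} = n choose 2"
    using n_subsets[of V 2] unfolding V_def by simp
  have cardE: "card E = (n choose 2) - n"
    unfolding E_def using card_Diff_subset[OF finite_subset[OF CsubP finP] CsubP] cardP cardC by simp
  have ev: "even (n * (n - 1))" by (cases "even n") auto
  have "2 * (n choose 2) = n * (n - 1)" unfolding choose_two using ev by simp
  then have "2 * card E = n * d" unfolding cardE n_def by (simp add: algebra_simps)
  then have "real (2 * card E) = real (n * d)" by simp
  then have "2 * real (card E) = real n * real d" by simp
  then have avg: "avg_degree V E \<le> real d" unfolding avg_degree_def V_def using n3 by simp
  have Vne: "V \<noteq> {}" unfolding V_def using n3 by auto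
  have adj: "{u, v} \<in> E" if "u \<in> V" "v \<in> V" "u \<noteq> v" "v \<noteq> Suc u mod n" "u \<noteq> Suc v mod n" for u v
  proof -
    have "{u, v} \<notin> C"
    proof
      assume "{u, v} \<in> C"
      then obtain i where "i < n" "{u, v} = {i, Suc i mod n}" unfolding C_def by auto
      then show False using that by (auto simp: doubleton_eq_iff)
    qed
    then show ?thesis unfolding E_def using that by auto
  qed
  have bound: "card S \<le> k + 2" if S: "S \<subseteq> V" "k_independent E k S" for S
  proof (rule ccontr)
    assume big: "\<not> card S \<le> k + 2"
    have finS: "finite S" using S(1) unfolding V_def using finite_subset by blast
    show False
    proof (cases "S = V")
      case True
      have "0 \<in> V" using Vne unfolding V_def by auto
      have sub: "S - {0, Suc 0 mod n, n - 1} \<subseteq> {u\<in>S. {u, 0} \<in> E}"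
      proof
        fix u assume u: "u \<in> S - {0, Suc 0 mod n, n - 1}"
        have "0 \<noteq> Suc u mod n"
        proof
          assume "0 = Suc u mod n"
          moreover have "u < n" using u S(1) unfolding V_def by auto
          ultimately have "Suc u = n"
          proof -
            assume z: "0 = Suc u mod n" and un: "u < n"
            show "Suc u = n"
            proof (rule ccontr)
              assume "Suc u \<noteq> n"
              then have "Suc u < n" using un by simp
              then show False using z by simp
            qed
          qed
          then show False using u by auto
        qed
        then show "u \<in> {u\<in>S. {u, 0} \<in> E}" using u adj[of u 0] S(1) \<open>0 \<in> V\<close> by auto
      qed
      have "card S \<le> card (S - {0, Suc 0 mod n, n - 1}) + card {0, Suc 0 mod n, n - 1}"
        by (rule card_diff_ge[OF finS]) simp
      moreover have "card {0, Suc 0 mod n, n - 1} \<le> 3" by (simp add: card_insert_le_m1)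
      moreover have "card (S - {0, Suc 0 mod n, n - 1}) \<le> card {u\<in>S. {u, 0} \<in> E}"
        using sub finS by (intro card_mono) auto
      moreover have "card {u\<in>S. {u, 0} \<in> E} \<le> k"
        using S(2) \<open>0 \<in> V\<close> True unfolding k_independent_def by auto
      moreover have "card S = n" using True unfolding V_def by simp
      ultimately show False using assms(1) unfolding n_def by linarith
    next
      case False
      then obtain w where w: "w < n" "w \<notin> S" using S(1) unfolding V_def by (meson atLeastLessThan_iff subsetI subset_antisym zero_le)
      have Sne: "S \<noteq> {}" using big by auto
      have Sn: "\<And>s. s \<in> S \<Longrightarrow> s < n" using S(1) unfolding V_def by auto
      have sucmod: "Suc u mod n = (if Suc u = n then 0 else Suc u)" if "u < n" for u
        using that by auto
      obtain v where v: "v \<in> S" "\<forall>u\<in>S. v \<noteq> Suc u mod n"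
      proof (cases "\<exists>s\<in>S. s > w")
        case True
        let ?T = "{s\<in>S. s > w}"
        have fT: "finite ?T" using finS by simp
        have neT: "?T \<noteq> {}" using True by auto
        define v where "v = Min ?T"
        have vT: "v \<in> ?T" unfolding v_def using Min_in[OF fT neT] .
        have vmin: "\<And>s. s \<in> ?T \<Longrightarrow> v \<le> s" unfolding v_def using Min_le[OF fT] by blast
        have "\<forall>u\<in>S. v \<noteq> Suc u mod n"
        proof
          fix u assume u: "u \<in> S"
          show "v \<noteq> Suc u mod n"
          proof
            assume h: "v = Suc u mod n"
            show False
            proof (cases "Suc u = n")
              case True then show False using h vT by simp
            next
              case False
              then have "v = Suc u" using h sucmod[OF Sn[OF u]] by simp
              moreover have "u \<noteq> w" using u w by auto
              ultimately have "u \<in> ?T" using vT u by auto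
              then show False using vmin \<open>v = Suc u\<close> by fastforce
            qed
          qed
        qed
        then show ?thesis using that vT by auto
      next
        case False
        define v where "v = Min S"
        have vS: "v \<in> S" unfolding v_def using Min_in[OF finS Sne] .
        have vmin: "\<And>s. s \<in> S \<Longrightarrow> v \<le> s" unfolding v_def using Min_le[OF finS] by blast
        have "\<forall>u\<in>S. v \<noteq> Suc u mod n"
        proof
          fix u assume u: "u \<in> S"
          show "v \<noteq> Suc u mod n"
          proof
            assume h: "v = Suc u mod n"
            show False
            proof (cases "Suc u = n")
              case True
              moreover have "u \<noteq> w" using u w by auto
              ultimately have "u > w" using w by simp
              then show False using False u by auto
            next
              case c: False
              then have "v = Suc u" using h sucmod[OF Sn[OF u]] by simp
              then show False using vmin[OF u] by simp
            qed
          qed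
        qed
        then show ?thesis using that vS by auto
      qed
      have vV: "v \<in> V" using v S(1) by auto
      have sub: "S - {v, Suc v mod n} \<subseteq> {u\<in>S. {u, v} \<in> E}"
      proof
        fix u assume u: "u \<in> S - {v, Suc v mod n}"
        then show "u \<in> {u\<in>S. {u, v} \<in> E}" using adj[of u v] v vV S(1) by auto
      qed
      have "card S \<le> card (S - {v, Suc v mod n}) + card {v, Suc v mod n}"
        by (rule card_diff_ge[OF finS]) simp
      moreover have "card {v, Suc v mod n} \<le> 2" by (simp add: card_insert_le_m1)
      moreover have "card (S - {v, Suc v mod n}) \<le> card {u\<in>S. {u, v} \<in> E}"
        using sub finS by (intro card_mono) auto
      moreover have "card {u\<in>S. {u, v} \<in> E} \<le> k"
        using S(2) v(1) unfolding k_independent_def by auto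
      ultimately show False using big by linarith
    qed
  qed
  have finA: "finite {card S | S. S \<subseteq> V \<and> k_independent E k S}"
  proof -
    have "{card S | S. S \<subseteq> V \<and> k_independent E k S} \<subseteq> card ` Pow V" by auto
    then show ?thesis unfolding V_def by (rule finite_subset) simp
  qed
  have neA: "{card S | S. S \<subseteq> V \<and> k_independent E k S} \<noteq> {}"
  proof -
    have "k_independent E k {}" unfolding k_independent_def by simp
    then show ?thesis by blast
  qed
  have "alpha_k V E k \<le> k + 2"
    unfolding alpha_k_def using Max_le_iff[OF finA neA] bound by auto
  then show ?thesis using sg avg Vne by simp
qed

theorem mainTheorem10:
  fixes k d :: nat
  assumes "d > k"
  shows "f_kd k d \<le> real (k + 2) / real (d + 3)"
proof -
  define n where "n = d + 3"
  define V where "V = {0..<n}"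
  define C where "C = (\<lambda>i. {i, Suc i mod n}) ` {0..<n}"
  define E where "E = {e. e \<subseteq> V \<and> card e = 2} - C"
  have H: "simple_graph V E \<and> V \<noteq> {} \<and> avg_degree V E \<le> real d \<and> alpha_k V E k \<le> k + 2"
    using mainTheorem10_aux[OF assms] unfolding E_def C_def V_def n_def by simp
  let ?A = "{real (alpha_k V E k) / real (card V) | V E.
                    simple_graph V E \<and> V \<noteq> {} \<and> avg_degree V E \<le> real d}"
  have mem: "real (alpha_k V E k) / real (card V) \<in> ?A" using H by blast
  have bdd: "bdd_below ?A" by (rule bdd_belowI[of _ 0]) auto
  have "f_kd k d \<le> real (alpha_k V E k) / real (card V)"
    unfolding f_kd_def using cInf_lower[OF mem bdd] .
  also have "\<dots> \<le> real (k + 2) / real (d + 3)"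
    using H unfolding V_def n_def by (simp add: divide_right_mono)
  finally show ?thesis .
qed

end
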